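(* Let $\hat{a}\in\mathbb{C}$, $\hat{a}\neq 0$, and $\hat{d}\in\mathbb{Z}$, $\hat{d}\geq 0$. Let $F_0,F_1$ be causal filters, not both zero, with $\gcd(F_0,F_1)=z^{-d_F}$ where $0\leq d_F\leq\hat{d}$, and let $M\in\mathbb{Z}$ satisfy $0\leq M\leq \hat{d}-d_F$. Suppose $(E_0,E_1)$ is a causal complement to $(F_0,F_1)$ for $\hat{a}z^{-\hat{d}}$, i.e. $F_0E_1-F_1E_0=\hat{a}z^{-\hat{d}}$. Define $\widetilde{F}_j(z)=z^{d_F}F_j(z)$, $j=0,1$ (which are causal), and let $\ell\in\{0,1\}$ be an index for which $\widetilde{F}_\ell$ is left-justified. Then there exists a unique causal filter $S(z)$ such that the pair $(R_0,R_1)=(E_0-S\widetilde{F}_0,\;E_1-S\widetilde{F}_1)$ is a causal complement to $(F_0,F_1)$ for $\hat{a}z^{-\hat{d}}$ that is degree-reducing modulo $M$ in $F_\ell$; moreover this $(R_0,R_1)$ is the unique causal complement to $(F_0,F_1)$ for $\hat{a}z^{-\hat{d}}$ that is degree-reducing modulo $M$ in $F_\ell$.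
   Context: A causal filter is a polynomial in $z^{-1}$ with complex coefficients; $\deg$ denotes degree in $z^{-1}$ ($\deg 0=-\infty$); gcd and divisibility are in $\mathbb{C}[z^{-1}]$ (up to nonzero constants). A causal filter $F$ is left-justified if $z^{-1}\nmid F$, i.e. its constant term $f(0)$ is nonzero. An ordered pair $(R_0,R_1)$ of causal filters is a causal complement to $(F_0,F_1)$ for inhomogeneity $\hat{a}z^{-\hat{d}}$ if $F_0R_1-F_1R_0=\hat{a}z^{-\hat{d}}$. It is degree-reducing modulo $M$ in $F_\ell$ ($\ell\in\{0,1\}$) if $z^{-M}$ divides both $R_0$ and $R_1$ and $\deg(R_\ell)<\deg(F_\ell)-\deg\gcd(F_0,F_1)+M$. *)

theory Defs
  imports "HOL-Computational_Algebra.Polynomial_Factorial" "HOL-Computational_Algebra.Field_as_Ring" Complex_Main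
begin

text \<open>A causal filter is modelled as a polynomial in the variable w = z^{-1},
  i.e. an element of complex poly; z^{-k} is monom 1 k.\<close>

type_synonym filter = "complex poly"

definition left_justified :: "filter \<Rightarrow> bool" where
  "left_justified F \<longleftrightarrow> \<not> (monom 1 1 dvd F)"

definition causal_complement ::
  "filter \<Rightarrow> filter \<Rightarrow> complex \<Rightarrow> nat \<Rightarrow> filter \<Rightarrow> filter \<Rightarrow> bool" where
  "causal_complement F0 F1 a d R0 R1 \<longleftrightarrow> F0 * R1 - F1 * R0 = monom a d"

text \<open>Degree-reducing modulo M in F_l (l = 0 or 1), with the convention deg 0 = -infinity:
  the inequality deg R_l < deg F_l - deg gcd(F0,F1) + M holds trivially when R_l = 0
  and F_l \<noteq> 0, and fails when F_l = 0 (right-hand side is -infinity).\<close>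

definition deg_reducing ::
  "nat \<Rightarrow> nat \<Rightarrow> filter \<Rightarrow> filter \<Rightarrow> filter \<Rightarrow> filter \<Rightarrow> bool" where
  "deg_reducing M l F0 F1 R0 R1 \<longleftrightarrow>
     monom 1 M dvd R0 \<and> monom 1 M dvd R1 \<and>
     (let R = (if l = 0 then R0 else R1); F = (if l = 0 then F0 else F1) in
        F \<noteq> 0 \<and> (R = 0 \<or> int (degree R) < int (degree F) - int (degree (gcd F0 F1)) + int M))"

end

theory Submission
  imports Defs
begin

lemma w_coprime:
  fixes G :: "complex poly"
  assumes "\<not> monom 1 1 dvd G"
  shows "coprime (monom 1 M) G"
proof -
  have p: "prime_elem [:0,1::complex:]" by (rule prime_elem_linear_field_poly) simp
  have e: "monom (1::complex) 1 = [:0,1:]" by (simp add: monom_altdef)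
  have "coprime [:0,1::complex:] G" using prime_elem_imp_coprime[OF p] assms e by simp
  moreover have "monom (1::complex) M = [:0,1:]^M" by (simp add: monom_altdef)
  ultimately show ?thesis by simp
qed

lemma deg_ge_M:
  fixes p :: "complex poly"
  assumes "monom 1 M dvd p" "p \<noteq> 0"
  shows "M \<le> degree p"
proof -
  obtain q where q: "p = monom 1 M * q" using assms(1) by blast
  hence "q \<noteq> 0" using assms(2) by auto
  hence "degree p = M + degree q" using q by (simp add: degree_mult_eq degree_monom_eq)
  thus ?thesis by simp
qed

lemma core_exists:
  fixes G H E E' :: "complex poly"
  assumes cop: "coprime G H" and nw: "\<not> monom 1 1 dvd G" and Mk: "M \<le> k"
    and eq: "G * E' - H * E = monom c k"
  shows "\<exists>S. monom 1 M dvd (E - S * G) \<and> monom 1 M dvd (E' - S * H) \<and>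
            (E - S * G = 0 \<or> degree (E - S * G) < degree G + M)"
proof -
  have G0: "G \<noteq> 0" using nw by auto
  have cw: "coprime (monom 1 M) G" by (rule w_coprime[OF nw])
  obtain u v where uv: "u * monom 1 M + v * G = 1"
    using bezout_coefficients_fst_snd[of "monom 1 M" G] cw
    by (metis coprime_iff_gcd_eq_1)
  define Q where "Q = (u * E) mod G"
  define kk where "kk = (u * E) div G"
  have ue: "u * E = kk * G + Q" unfolding Q_def kk_def by simp
  define S where "S = E * v + monom 1 M * kk"
  have R: "E - S * G = monom 1 M * Q"
  proof -
    have "E = E * (u * monom 1 M + v * G)" using uv by simp
    also have "\<dots> = (u * E) * monom 1 M + E * v * G" by (simp add: algebra_simps)
    also have "\<dots> = monom 1 M * Q + S * G" unfolding ue S_def by (simp add: algebra_simps)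
    finally show ?thesis by simp
  qed
  have d1: "monom 1 M dvd (E - S * G)" using R by simp
  have deg: "E - S * G = 0 \<or> degree (E - S * G) < degree G + M"
  proof (cases "Q = 0")
    case True thus ?thesis using R by simp
  next
    case False
    hence "degree Q < degree G" using degree_mod_less[OF G0, of "u*E"] Q_def by auto
    thus ?thesis using R False by (simp add: degree_mult_eq degree_monom_eq)
  qed
  have "G * (E' - S * H) = monom c k + H * (E - S * G)" using eq by (simp add: algebra_simps)
  moreover have "monom 1 M dvd monom c k"
  proof -
    have "monom c k = monom 1 M * monom c (k - M)" using Mk by (simp add: mult_monom)
    thus ?thesis by (metis dvd_triv_left)
  qed
  ultimately have "monom 1 M dvd G * (E' - S * H)" using d1 by (simp add: dvd_add)
  hence d2: "monom 1 M dvd (E' - S * H)" using cw by (simp add: coprime_dvd_mult_right_iff)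
  show ?thesis using d1 d2 deg by blast
qed

lemma core_unique:
  fixes G H E E' R R' :: "complex poly"
  assumes cop: "coprime G H" and nw: "\<not> monom 1 1 dvd G"
    and eq: "G * E' - H * E = monom c k"
    and d1: "monom 1 M dvd (E - S * G)"
    and deg: "E - S * G = 0 \<or> degree (E - S * G) < degree G + M"
    and eqR: "G * R' - H * R = monom c k"
    and dR: "monom 1 M dvd R"
    and degR: "R = 0 \<or> degree R < degree G + M"
  shows "R = E - S * G \<and> R' = E' - S * H"
proof -
  have G0: "G \<noteq> 0" using nw by auto
  have cw: "coprime (monom 1 M) G" by (rule w_coprime[OF nw])
  have "G * (R' - E') = H * (R - E)" using eq eqR by (simp add: algebra_simps)
  hence "G dvd H * (R - E)" by (metis dvd_triv_left)
  hence "G dvd (R - E)" using cop by (simp add: coprime_dvd_mult_right_iff)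
  then obtain T0 where T0: "R - E = G * T0" by blast
  define T where "T = - T0"
  have RT: "R = E - T * G" using T0 unfolding T_def by (simp add: algebra_simps)
  have diff: "(E - S * G) - R = (T - S) * G" using RT by (simp add: algebra_simps)
  have "monom 1 M dvd (T - S) * G" using diff d1 dR by (metis dvd_diff)
  hence dTS: "monom 1 M dvd (T - S)" using cw by (simp add: coprime_dvd_mult_left_iff)
  have "T = S"
  proof (rule ccontr)
    assume "T \<noteq> S"
    hence nz: "T - S \<noteq> 0" by simp
    have "M \<le> degree (T - S)" by (rule deg_ge_M[OF dTS nz])
    hence big: "degree G + M \<le> degree ((E - S * G) - R)" using diff nz G0
      by (simp add: degree_mult_eq)
    have "degree ((E - S * G) - R) \<le> max (degree (E - S * G)) (degree R)" by (rule degree_diff_le_max)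
    moreover have "(E - S * G) - R \<noteq> 0" using diff nz G0 by simp
    ultimately show False using big deg degR
      by (cases "E - S * G = 0"; cases "R = 0") auto
  qed
  hence R1: "R = E - S * G" using RT by simp
  have "G * (R' - E') = G * (- S * H)" using eq eqR R1 by (simp add: algebra_simps)
  hence "R' - E' = - S * H" using G0 mult_left_cancel by blast
  hence "R' = E' - S * H" by (simp add: algebra_simps)
  thus ?thesis using R1 by simp
qed

theorem theorem2p6:
  fixes a :: complex and d dF M l :: nat and F0 F1 E0 E1 :: "complex poly"
  assumes "a \<noteq> 0"
    and "F0 \<noteq> 0 \<or> F1 \<noteq> 0"
    and "gcd F0 F1 = monom 1 dF" and "dF \<le> d"
    and "M \<le> d - dF"
    and "causal_complement F0 F1 a d E0 E1"
    and "l \<in> {0, 1}"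
    and "left_justified ((if l = 0 then F0 else F1) div monom 1 dF)"
  shows "\<exists>S. causal_complement F0 F1 a d (E0 - S * (F0 div monom 1 dF)) (E1 - S * (F1 div monom 1 dF))
            \<and> deg_reducing M l F0 F1 (E0 - S * (F0 div monom 1 dF)) (E1 - S * (F1 div monom 1 dF))
            \<and> (\<forall>S'. causal_complement F0 F1 a d (E0 - S' * (F0 div monom 1 dF)) (E1 - S' * (F1 div monom 1 dF))
                   \<and> deg_reducing M l F0 F1 (E0 - S' * (F0 div monom 1 dF)) (E1 - S' * (F1 div monom 1 dF))
                   \<longrightarrow> S' = S)
            \<and> (\<forall>R0 R1. causal_complement F0 F1 a d R0 R1 \<and> deg_reducing M l F0 F1 R0 R1
                   \<longrightarrow> R0 = E0 - S * (F0 div monom 1 dF) \<and> R1 = E1 - S * (F1 div monom 1 dF))"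
proof -
  note A = assms
  define G0 where "G0 = F0 div monom 1 dF"
  define G1 where "G1 = F1 div monom 1 dF"
  define W where "W = (monom 1 dF :: complex poly)"
  have W0: "W \<noteq> 0" unfolding W_def by simp
  have F0e: "F0 = W * G0" unfolding W_def G0_def using A(3)
    by (metis dvd_mult_div_cancel gcd_dvd1)
  have F1e: "F1 = W * G1" unfolding W_def G1_def using A(3)
    by (metis dvd_mult_div_cancel gcd_dvd2)
  have nW: "normalize W = W" unfolding W_def by simp
  have "W * gcd G0 G1 = W * 1"
  proof -
    have "gcd F0 F1 = normalize (W * gcd G0 G1)" using F0e F1e gcd_mult_left by simp
    also have "\<dots> = W * gcd G0 G1" by (simp add: normalize_mult nW)
    finally show ?thesis using A(3) W_def by simp
  qed
  hence "gcd G0 G1 = 1" using mult_left_cancel[OF W0] by simp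
  hence cop: "coprime G0 G1" by (simp add: coprime_iff_gcd_eq_1)
  have md: "monom a d = W * monom a (d - dF)" unfolding W_def using A(4) by (simp add: mult_monom)
  have cc: "causal_complement F0 F1 a d R0 R1 \<longleftrightarrow> G0 * R1 - G1 * R0 = monom a (d - dF)" for R0 R1
  proof -
    have "F0 * R1 - F1 * R0 = W * (G0 * R1 - G1 * R0)" using F0e F1e by (simp add: algebra_simps)
    thus ?thesis unfolding causal_complement_def md using mult_left_cancel[OF W0] by simp
  qed
  have cc': "causal_complement F0 F1 a d R0 R1 \<longleftrightarrow> G1 * R0 - G0 * R1 = monom (-a) (d - dF)" for R0 R1
  proof -
    have "G1 * R0 - G0 * R1 = - (G0 * R1 - G1 * R0)" by simp
    moreover have "monom (-a) (d - dF) = - monom a (d - dF)" by (simp add: minus_monom)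
    ultimately show ?thesis unfolding cc by (simp only: neg_equal_iff_equal)
  qed
  have dgcd: "degree (gcd F0 F1) = dF" using A(3) by (simp add: degree_monom_eq)
  have dW: "degree W = dF" unfolding W_def by (simp add: degree_monom_eq)
  have nw0: "l = 0 \<Longrightarrow> \<not> monom 1 1 dvd G0" using A(8) unfolding left_justified_def G0_def by simp
  have nw1: "l \<noteq> 0 \<Longrightarrow> \<not> monom 1 1 dvd G1" using A(8) unfolding left_justified_def G1_def by simp
  have dr0: "l = 0 \<Longrightarrow> deg_reducing M l F0 F1 R0 R1 \<longleftrightarrow>
     monom 1 M dvd R0 \<and> monom 1 M dvd R1 \<and> (R0 = 0 \<or> degree R0 < degree G0 + M)" for R0 R1
  proof -
    assume l: "l = 0"
    hence "G0 \<noteq> 0" using nw0 by auto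
    hence "F0 \<noteq> 0" "degree F0 = dF + degree G0" using F0e W0 dW by (auto simp: degree_mult_eq)
    thus ?thesis unfolding deg_reducing_def using l dgcd by auto
  qed
  have dr1: "l \<noteq> 0 \<Longrightarrow> deg_reducing M l F0 F1 R0 R1 \<longleftrightarrow>
     monom 1 M dvd R1 \<and> monom 1 M dvd R0 \<and> (R1 = 0 \<or> degree R1 < degree G1 + M)" for R0 R1
  proof -
    assume l: "l \<noteq> 0"
    hence "G1 \<noteq> 0" using nw1 by auto
    hence "F1 \<noteq> 0" "degree F1 = dF + degree G1" using F1e W0 dW by (auto simp: degree_mult_eq)
    thus ?thesis unfolding deg_reducing_def using l dgcd by auto
  qed
  have ccS: "causal_complement F0 F1 a d (E0 - S * G0) (E1 - S * G1)" for S
  proof -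
    have "G0 * E1 - G1 * E0 = monom a (d - dF)" using A(6) cc by blast
    moreover have "G0 * (E1 - S * G1) - G1 * (E0 - S * G0) = G0 * E1 - G1 * E0" by (simp add: algebra_simps)
    ultimately show ?thesis using cc by simp
  qed
  have Mk: "M \<le> d - dF" using A(5) .
  show ?thesis
  proof (cases "l = 0")
    case True
    have eq: "G0 * E1 - G1 * E0 = monom a (d - dF)" using A(6) cc by blast
    obtain S where S: "monom 1 M dvd (E0 - S * G0) \<and> monom 1 M dvd (E1 - S * G1) \<and>
            (E0 - S * G0 = 0 \<or> degree (E0 - S * G0) < degree G0 + M)"
      using core_exists[OF cop nw0[OF True] Mk eq] by blast
    have U: "causal_complement F0 F1 a d R0 R1 \<and> deg_reducing M l F0 F1 R0 R1 \<Longrightarrow>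
        R0 = E0 - S * G0 \<and> R1 = E1 - S * G1" for R0 R1
    proof -
      assume h: "causal_complement F0 F1 a d R0 R1 \<and> deg_reducing M l F0 F1 R0 R1"
      have h1: "G0 * R1 - G1 * R0 = monom a (d - dF)" using h cc by simp
      have h2: "monom 1 M dvd R0 \<and> monom 1 M dvd R1 \<and> (R0 = 0 \<or> degree R0 < degree G0 + M)"
        using h dr0[OF True] by simp
      show ?thesis using core_unique[OF cop nw0[OF True] eq _ _ h1, of M S] S h2 by simp
    qed
    show ?thesis unfolding G0_def[symmetric] G1_def[symmetric]
    proof (rule exI[of _ S], intro conjI allI impI)
      show "causal_complement F0 F1 a d (E0 - S * G0) (E1 - S * G1)" by (rule ccS)
      show "deg_reducing M l F0 F1 (E0 - S * G0) (E1 - S * G1)" using S dr0[OF True] by blast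
      fix S' assume h: "causal_complement F0 F1 a d (E0 - S' * G0) (E1 - S' * G1) \<and>
           deg_reducing M l F0 F1 (E0 - S' * G0) (E1 - S' * G1)"
      have "E0 - S' * G0 = E0 - S * G0" using U[OF h] by blast
      hence "S' * G0 = S * G0" by simp
      moreover have "G0 \<noteq> 0" using nw0[OF True] by auto
      ultimately show "S' = S" using mult_right_cancel by blast
    next
      fix R0 R1 assume h: "causal_complement F0 F1 a d R0 R1 \<and> deg_reducing M l F0 F1 R0 R1"
      show "R0 = E0 - S * G0" using U[OF h] by blast
      show "R1 = E1 - S * G1" using U[OF h] by blast
    qed
  next
    case False
    have eq: "G1 * E0 - G0 * E1 = monom (-a) (d - dF)" using A(6) cc' by blast
    obtain S where S: "monom 1 M dvd (E1 - S * G1) \<and> monom 1 M dvd (E0 - S * G0) \<and>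
            (E1 - S * G1 = 0 \<or> degree (E1 - S * G1) < degree G1 + M)"
      using core_exists[OF cop[THEN coprime_commute[THEN iffD1]] nw1[OF False] Mk eq] by blast
    have U: "causal_complement F0 F1 a d R0 R1 \<and> deg_reducing M l F0 F1 R0 R1 \<Longrightarrow>
        R1 = E1 - S * G1 \<and> R0 = E0 - S * G0" for R0 R1
    proof -
      assume h: "causal_complement F0 F1 a d R0 R1 \<and> deg_reducing M l F0 F1 R0 R1"
      have h1: "G1 * R0 - G0 * R1 = monom (-a) (d - dF)" using h cc' by simp
      have h2: "monom 1 M dvd R1 \<and> monom 1 M dvd R0 \<and> (R1 = 0 \<or> degree R1 < degree G1 + M)"
        using h dr1[OF False] by simp
      show ?thesis using core_unique[OF cop[THEN coprime_commute[THEN iffD1]] nw1[OF False] eq _ _ h1, of M S] S h2 by simp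
    qed
    show ?thesis unfolding G0_def[symmetric] G1_def[symmetric]
    proof (rule exI[of _ S], intro conjI allI impI)
      show "causal_complement F0 F1 a d (E0 - S * G0) (E1 - S * G1)" by (rule ccS)
      show "deg_reducing M l F0 F1 (E0 - S * G0) (E1 - S * G1)" using S dr1[OF False] by blast
      fix S' assume h: "causal_complement F0 F1 a d (E0 - S' * G0) (E1 - S' * G1) \<and>
           deg_reducing M l F0 F1 (E0 - S' * G0) (E1 - S' * G1)"
      have "E1 - S' * G1 = E1 - S * G1" using U[OF h] by blast
      hence "S' * G1 = S * G1" by simp
      moreover have "G1 \<noteq> 0" using nw1[OF False] by auto
      ultimately show "S' = S" using mult_right_cancel by blast
    next
      fix R0 R1 assume h: "causal_complement F0 F1 a d R0 R1 \<and> deg_reducing M l F0 F1 R0 R1"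
      show "R0 = E0 - S * G0" using U[OF h] by blast
      show "R1 = E1 - S * G1" using U[OF h] by blast
    qed
  qed
qed

end
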